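(* Let $q=2^h$, $m\ge1$, and on $V=\mathbb{F}_q^{2m}$ let $\langle u,v\rangle=uFv^T$ with $F=\begin{pmatrix}0&I_m\\ I_m&0\end{pmatrix}$, $\vartheta_0(u)=uEu^T$ with $E=\begin{pmatrix}0&I_m\\0&0\end{pmatrix}$, and $\vartheta_a(u)=\vartheta_0(u)+\langle a,u\rangle^2$ for $a\in V$. For $c\in V$ let $T_c:V\to V$, $u\mapsto u+\langle u,c\rangle c$ be the symplectic transvection, and for a quadratic form $\Theta$ and invertible linear $A$ put $\Theta^A(u)=\Theta(uA^{-1})$. Let $a,b\in V$, $a\neq b$. The following are equivalent: (i) there exists $c\in V$ with $\vartheta_a^{T_c}=\vartheta_b$; (ii) there exists $\gamma\in\mathbb{F}_q^*$ with $\vartheta_a^{T_{\gamma(a+b)}}=\vartheta_b$; (iii) $\mathrm{Tr}_{\mathbb{F}_q/\mathbb{F}_2}(\vartheta_0(a))=\mathrm{Tr}_{\mathbb{F}_q/\mathbb{F}_2}(\vartheta_0(b))$; (iv) the polynomial $t^2+t+\vartheta_0(a)+\vartheta_0(b)$ is reducible over $\mathbb{F}_q$. *)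

theory Defs
  imports "HOL-Analysis.Analysis" "HOL-Computational_Algebra.Polynomial"
begin

text \<open>The space V = F_q^{2m} is represented as pairs (x, y) with x, y in F_q^m,
  i.e. a row vector u = (x | y) split into its two blocks of length m.\<close>

type_synonym ('a, 'm) sp = "('a ^ 'm) \<times> ('a ^ 'm)"

text \<open>Symplectic form u F v^T with F = [[0, I_m], [I_m, 0]].\<close>
definition bil :: "('a::field, 'm::finite) sp \<Rightarrow> ('a, 'm) sp \<Rightarrow> 'a" where
  "bil u v = (\<Sum>i\<in>UNIV. fst u $ i * snd v $ i + snd u $ i * fst v $ i)"

text \<open>Quadratic form u E u^T with E = [[0, I_m], [0, 0]].\<close>
definition theta0 :: "('a::field, 'm::finite) sp \<Rightarrow> 'a" where
  "theta0 u = (\<Sum>i\<in>UNIV. fst u $ i * snd u $ i)"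

definition theta :: "('a::field, 'm::finite) sp \<Rightarrow> ('a, 'm) sp \<Rightarrow> 'a" where
  "theta a u = theta0 u + (bil a u)^2"

definition sp_scale :: "'a::field \<Rightarrow> ('a, 'm::finite) sp \<Rightarrow> ('a, 'm) sp" where
  "sp_scale k u = (k *s fst u, k *s snd u)"

definition sp_add :: "('a::field, 'm::finite) sp \<Rightarrow> ('a, 'm) sp \<Rightarrow> ('a, 'm) sp" where
  "sp_add u v = (fst u + fst v, snd u + snd v)"

definition transv :: "('a::field, 'm::finite) sp \<Rightarrow> ('a, 'm) sp \<Rightarrow> ('a, 'm) sp" where
  "transv c u = sp_add u (sp_scale (bil u c) c)"

definition qf_act :: "(('a, 'm) sp \<Rightarrow> 'a) \<Rightarrow> (('a, 'm) sp \<Rightarrow> ('a, 'm) sp) \<Rightarrow> ('a, 'm) sp \<Rightarrow> 'a" where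
  "qf_act Theta A = (\<lambda>u. Theta (inv A u))"

text \<open>Absolute trace Tr_{F_q/F_2}(x) = sum_{i<h} x^(2^i) for q = 2^h.\<close>
definition trace2 :: "nat \<Rightarrow> 'a::field \<Rightarrow> 'a" where
  "trace2 h x = (\<Sum>i<h. x ^ (2 ^ i))"

end

theory Submission
  imports Defs
begin


lemma fermat:
  fixes x :: "'a::{field,finite}"
  assumes "x \<noteq> 0"
  shows "x ^ (CARD('a) - 1) = 1"
proof -
  let ?N = "UNIV - {0::'a}"
  have cardN: "card ?N = CARD('a) - 1" by (simp add: card_Diff_subset)
  have bij: "bij_betw (\<lambda>y. x * y) ?N ?N"
    unfolding bij_betw_def
  proof
    show "inj_on ((*) x) ?N" using assms by (auto simp: inj_on_def)
    show "(*) x ` ?N = ?N"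
    proof
      show "(*) x ` ?N \<subseteq> ?N" using assms by auto
      show "?N \<subseteq> (*) x ` ?N"
      proof
        fix y assume "y \<in> ?N"
        then have "y = x * (y / x)" "y / x \<in> ?N" using assms by auto
        then show "y \<in> (*) x ` ?N" by blast
      qed
    qed
  qed
  have "prod (\<lambda>y. x * y) ?N = prod id ?N"
    using prod.reindex_bij_betw[OF bij, of id] by simp
  moreover have "prod (\<lambda>y. x * y) ?N = x ^ card ?N * prod id ?N"
    by (simp add: prod.distrib)
  moreover have "prod id ?N \<noteq> 0" by (simp add: prod_zero_iff)
  ultimately have "x ^ card ?N = 1" by simp
  then show ?thesis using cardN by simp
qed

lemma card_ge2: "CARD('a::{field,finite}) \<ge> 2"
proof -
  have "card {0::'a, 1} \<le> CARD('a)" by (rule card_mono) auto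
  then show ?thesis by simp
qed

lemma h_pos:
  assumes "CARD('a::{field,finite}) = 2 ^ h" shows "h \<ge> 1"
  using card_ge2[where 'a='a] assms by (cases h) auto

lemma char2:
  assumes "CARD('a::{field,finite}) = 2 ^ h" shows "(2::'a) = 0"
proof -
  have h: "h \<ge> 1" using h_pos assms by blast
  have "(-1::'a) ^ (2^h - 1) = 1" using fermat[of "-1::'a"] assms by simp
  moreover have "odd (2^h - 1::nat)" using h by (simp add: odd_pos)
  ultimately have "(-1::'a) = 1" by simp
  then show ?thesis by (metis add_eq_0_iff equation_minus_iff one_add_one)
qed

lemma frob:
  fixes x :: "'a::{field,finite}"
  assumes "CARD('a) = 2 ^ h" shows "x ^ (2^h) = x"
proof (cases "x = 0")
  case True then show ?thesis using h_pos[OF assms] by simp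
next
  case False
  have "x ^ (2^h) = x ^ (2^h - 1) * x" using h_pos[OF assms]
    by (metis One_nat_def Suc_pred mult.commute pos2 power_Suc zero_less_power)
  then show ?thesis using fermat[OF False] assms by simp
qed



lemma c2_add_self: "(2::'a::field) = 0 \<Longrightarrow> x + x = (0::'a)"
  by (metis mult_2 mult_zero_left)
lemma c2_neg: "(2::'a::field) = 0 \<Longrightarrow> - x = (x::'a)"
  by (metis add_eq_0_iff c2_add_self)
lemma c2_minus: "(2::'a::field) = 0 \<Longrightarrow> x - y = (x::'a) + y"
  by (metis c2_neg diff_conv_add_uminus)
lemma c2_sq: "(2::'a::field) = 0 \<Longrightarrow> (x + y)^2 = (x::'a)^2 + y^2"
  by (simp add: power2_sum)
lemma c2_eq: "(2::'a::field) = 0 \<Longrightarrow> (x + y = 0) = ((x::'a) = y)"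
  by (metis c2_neg add_eq_0_iff)
lemma c2_pow: "(2::'a::field) = 0 \<Longrightarrow> (x + y)^(2^i) = (x::'a)^(2^i) + y^(2^i)"
proof (induction i)
  case (Suc i)
  have "(x + y)^(2^Suc i) = ((x + y)^(2^i))^2" by (simp add: power_mult[symmetric] mult.commute)
  also have "\<dots> = (x^(2^i))^2 + (y^(2^i))^2" using Suc by (simp add: c2_sq)
  also have "\<dots> = x^(2^Suc i) + y^(2^Suc i)" by (simp add: power_mult[symmetric] mult.commute)
  finally show ?case .
qed simp
lemma c2_sq_inj: "(2::'a::field) = 0 \<Longrightarrow> (x::'a)^2 = y^2 \<Longrightarrow> x = y"
  by (metis c2_eq c2_sq c2_add_self power_zero_numeral zero_eq_power2)

lemma bil_sym: "bil u v = bil v u"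
  unfolding bil_def by (simp add: algebra_simps)
lemma bil_add_left: "bil (sp_add u v) w = bil u w + bil v w"
  unfolding bil_def sp_add_def by (simp add: algebra_simps sum.distrib)
lemma bil_add_right: "bil w (sp_add u v) = bil w u + bil w v"
  by (metis bil_sym bil_add_left)
lemma bil_scale_left: "bil (sp_scale k u) w = k * bil u w"
  unfolding bil_def sp_scale_def by (simp add: algebra_simps sum_distrib_left)
lemma bil_scale_right: "bil w (sp_scale k u) = k * bil w u"
  by (metis bil_sym bil_scale_left)
lemma bil_self: "(2::'a::field) = 0 \<Longrightarrow> bil u u = (0::'a)"
  unfolding bil_def by (simp add: mult.commute c2_add_self)
lemma theta0_add: "theta0 (sp_add u v) = theta0 u + theta0 v + bil u v"
  unfolding theta0_def bil_def sp_add_def by (simp add: algebra_simps sum.distrib)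
lemma theta0_scale: "theta0 (sp_scale k u) = k^2 * theta0 u"
  unfolding theta0_def sp_scale_def by (simp add: algebra_simps sum_distrib_left power2_eq_square)

lemma sp_eq: "u = v \<longleftrightarrow> (\<forall>i. fst u $ i = fst v $ i) \<and> (\<forall>i. snd u $ i = snd v $ i)"
  by (simp add: prod_eq_iff vec_eq_iff)

lemma transv_invol:
  assumes "(2::'a::field) = 0"
  shows "transv c (transv c u) = (u :: ('a,'m::finite) sp)"
proof -
  have "bil (transv c u) c = bil u c"
    unfolding transv_def by (simp add: bil_add_left bil_scale_left bil_self[OF assms])
  then show ?thesis
    unfolding transv_def sp_eq
    by (simp add: sp_add_def sp_scale_def c2_add_self[OF assms] add.assoc assms
         flip: distrib_right)
qed

lemma inv_transv:
  assumes "(2::'a::field) = 0"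
  shows "inv (transv c) = (transv c :: ('a,'m::finite) sp \<Rightarrow> _)"
  by (rule inv_equality) (simp_all add: transv_invol[OF assms])

lemma theta_transv:
  fixes u :: "('a::field, 'm::finite) sp"
  assumes "(2::'a::field) = 0"
  shows "theta a (transv c u) = theta a u + (bil c u)^2 * (1 + theta a c)"

proof -
  let ?l = "bil u c"
  have "theta a (transv c u) = theta0 u + ?l^2 * theta0 c + ?l * ?l + (bil a u + ?l * bil a c)^2"
    unfolding theta_def transv_def
    by (simp add: theta0_add theta0_scale bil_scale_right bil_add_right)
  also have "\<dots> = theta0 u + ?l^2 * theta0 c + ?l^2 + (bil a u)^2 + ?l^2 * (bil a c)^2"
    by (simp add: c2_sq[OF assms] power2_eq_square algebra_simps assms)
  finally show ?thesis unfolding theta_def by (simp add: bil_sym[of c u] algebra_simps)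
qed

lemma mult_if1: "(x::'a::semiring_1) * (if P then 1 else 0) = (if P then x else 0)" by simp

lemma bil_nondeg:
  assumes "\<And>u. bil v u = bil w (u :: ('a::field,'m::finite) sp)"
  shows "v = w"
  unfolding sp_eq
proof safe
  fix i
  have "bil v (0, axis i 1) = bil w (0, axis i 1)" by (rule assms)
  then show "fst v $ i = fst w $ i"
    unfolding bil_def by (simp add: axis_def mult_if1)
  have "bil v (axis i 1, 0) = bil w (axis i 1, 0)" by (rule assms)
  then show "snd v $ i = snd w $ i"
    unfolding bil_def by (simp add: axis_def mult_if1)
qed



lemma tr_add: "(2::'a::field) = 0 \<Longrightarrow> trace2 h (x + y) = trace2 h x + trace2 h (y::'a)"
  unfolding trace2_def by (simp add: c2_pow sum.distrib)

lemma tr_eq: "(2::'a::field) = 0 \<Longrightarrow> (trace2 h (x::'a) = trace2 h y) = (trace2 h (x + y) = 0)"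
  by (simp add: tr_add c2_eq)

lemma tr_AS_aux:
  assumes "(2::'a::field) = 0"
  shows "(\<Sum>i<n. ((z::'a)^2)^(2^i)) + (\<Sum>i<n. z^(2^i)) = z^(2^n) + z"
proof (induction n)
  case 0 then show ?case by (simp add: c2_add_self[OF assms])
next
  case (Suc n)
  have e: "(z^2)^(2^n) = z^(2^Suc n)" by (simp add: power_mult[symmetric] mult.commute)
  have "(\<Sum>i<Suc n. (z^2)^(2^i)) + (\<Sum>i<Suc n. z^(2^i))
     = ((\<Sum>i<n. (z^2)^(2^i)) + (\<Sum>i<n. z^(2^i))) + (z^(2^Suc n) + z^(2^n))"
    using e by (simp add: algebra_simps)
  also have "\<dots> = z^(2^Suc n) + z + (z^(2^n) + z^(2^n))"
    using Suc by (simp add: algebra_simps)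
  finally show ?case by (simp add: c2_add_self[OF assms])
qed

lemma tr_AS:
  fixes z :: "'a::{field,finite}"
  assumes "CARD('a) = 2^h"
  shows "trace2 h (z^2 + z) = 0"
proof -
  have two: "(2::'a) = 0" by (rule char2[OF assms])
  have "trace2 h (z^2 + z) = z^(2^h) + z"
    using tr_AS_aux[OF two, where n=h and z=z] unfolding tr_add[OF two] unfolding trace2_def by simp
  then show ?thesis using frob[OF assms] c2_add_self[OF two] by simp
qed

lemma tr_surj:
  fixes d :: "'a::{field,finite}"
  assumes card: "CARD('a) = 2^h" and d: "trace2 h d = 0"
  shows "\<exists>z. z^2 + z = d"
proof -
  have two: "(2::'a) = 0" by (rule char2[OF card])
  have h: "h \<ge> 1" by (rule h_pos[OF card])
  define P :: "'a poly" where "P = (\<Sum>i<h. monom 1 (2^i))"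
  have polyP: "poly P x = trace2 h x" for x
    unfolding P_def trace2_def by (simp add: poly_sum poly_monom)
  have coeffP: "coeff P n = (\<Sum>i<h. if n = 2^i then 1 else 0)" for n
    unfolding P_def by (simp add: coeff_sum coeff_monom eq_commute)
  have "coeff P 1 = (\<Sum>i<h. if i = 0 then 1 else 0)"
    unfolding coeffP
  proof (rule sum.cong)
    fix i show "(if 1 = (2::nat) ^ i then (1::'a) else 0) = (if i = 0 then 1 else 0)"
      by (cases i) auto
  qed simp
  also have "\<dots> = 1" using h by simp
  finally have P0: "P \<noteq> 0" by auto
  have "degree P \<le> 2^(h-1)"
  proof (rule degree_le, intro allI impI)
    fix n :: nat assume n: "2^(h-1) < n"
    have "(\<Sum>i<h. if n = 2^i then (1::'a) else 0) = (\<Sum>i<h. 0)"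
    proof (rule sum.cong)
      fix i assume "i \<in> {..<h}"
      then have "(2::nat)^i \<le> 2^(h-1)" by (intro power_increasing) auto
      then show "(if n = 2^i then (1::'a) else 0) = 0" using n by auto
    qed simp
    then show "coeff P n = 0" unfolding coeffP by simp
  qed
  then have cardR: "card {x. poly P x = 0} \<le> 2^(h-1)"
    using card_poly_roots_bound[OF P0] by linarith
  define f where "f = (\<lambda>z::'a. z^2 + z)"
  have fib: "{x. f x = f z} = {z, z + 1}" for z
  proof -
    have "f x = f z \<longleftrightarrow> (x + z) * (x + z + 1) = 0" for x
    proof -
      have "(x + z) * (x + z + 1) = f x + f z + 2 * (x * z)"
        unfolding f_def by (simp add: algebra_simps power2_eq_square)
      then have "(x + z) * (x + z + 1) = f x + f z" by (simp add: two)
      then show ?thesis by (simp add: c2_eq[OF two])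
    qed
    moreover have "(x + z) * (x + z + 1) = 0 \<longleftrightarrow> x = z \<or> x = z + 1" for x
      using c2_eq[OF two, of x z] c2_eq[OF two, of x "z+1"] by (simp add: add.assoc)
    ultimately show ?thesis by auto
  qed
  have "CARD('a) = (\<Sum>y\<in>range f. card {x. f x = y})"
    using sum.image_gen[of "UNIV::'a set" "\<lambda>_. 1::nat" f] by simp
  also have "\<dots> = (\<Sum>y\<in>range f. 2)"
  proof (rule sum.cong)
    fix y assume "y \<in> range f"
    then obtain z where "y = f z" by auto
    then show "card {x. f x = y} = 2" using fib[of z] by simp
  qed simp
  finally have "2^h = 2 * card (range f)" using card by simp
  then have cf: "card (range f) = 2^(h-1)" using h
    by (metis (no_types, lifting) One_nat_def Suc_pred mult_cancel_left power_Suc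
        zero_less_one less_le_trans zero_neq_numeral)
  have sub: "range f \<subseteq> {x. poly P x = 0}"
    using tr_AS[OF card] by (auto simp: polyP f_def)
  have "range f = {x. poly P x = 0}"
    by (rule card_seteq) (use sub cardR cf in auto)
  then have "d \<in> range f" using d polyP by auto
  then show ?thesis unfolding f_def by auto
qed

lemma tr_iff:
  fixes d :: "'a::{field,finite}"
  assumes card: "CARD('a) = 2^h"
  shows "trace2 h d = 0 \<longleftrightarrow> (\<exists>z. z^2 + z = d)"
  using tr_surj[OF card] tr_AS[OF card] by auto

lemma deg2_reducible:
  fixes p :: "'a::field poly"
  assumes "degree p = 2"
  shows "\<not> irreducible p \<longleftrightarrow> (\<exists>x. poly p x = 0)"
proof
  assume "\<not> irreducible p"
  moreover have p0: "p \<noteq> 0" using assms by auto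
  moreover have "\<not> p dvd 1" using assms is_unit_iff_degree[OF p0] by simp
  ultimately obtain a b where ab: "p = a * b" "\<not> a dvd 1" "\<not> b dvd 1"
    unfolding irreducible_def by blast
  have a0: "a \<noteq> 0" and b0: "b \<noteq> 0" using ab p0 by auto
  have "degree a \<noteq> 0" using ab is_unit_iff_degree[OF a0] by simp
  moreover have "degree b \<noteq> 0" using ab is_unit_iff_degree[OF b0] by simp
  moreover have "degree a + degree b = 2" using degree_mult_eq[OF a0 b0] ab assms by simp
  ultimately have "degree a = 1" by linarith
  then obtain c0 c1 where a: "a = [:c0, c1:]" "c1 \<noteq> 0" by (rule degree1_coeffs)
  then have "poly a (- c0 / c1) = 0" by simp
  then show "\<exists>x. poly p x = 0" using ab by auto
next
  assume "\<exists>x. poly p x = 0"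
  then obtain x where "poly p x = 0" by blast
  then obtain q where q: "p = [:-x, 1:] * q" using poly_eq_0_iff_dvd by (metis dvdE)
  have p0: "p \<noteq> 0" using assms by auto
  then have q0: "q \<noteq> 0" using q by auto
  have "degree q = 1" using degree_mult_eq[OF _ q0, of "[:-x,1:]"] q assms by simp
  then have "\<not> q dvd 1" using is_unit_iff_degree[OF q0] by simp
  moreover have "\<not> [:-x, 1:] dvd 1" using is_unit_iff_degree[of "[:-x,1:]"] by simp
  ultimately show "\<not> irreducible p" using q irreducibleD by blast
qed



lemma sp_scale_scale: "sp_scale k (sp_scale l u) = sp_scale (k * l) u"
  unfolding sp_scale_def by simp
lemma sp_scale_one: "sp_scale 1 u = u"
  unfolding sp_scale_def by simp
lemma sp_scale_zero: "sp_scale 0 u = (0, 0)"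
  unfolding sp_scale_def by simp
lemma bil_zero: "bil (0, 0) u = 0"
  unfolding bil_def by simp

lemma sqrt_ex:
  fixes x :: "'a::{field,finite}"
  assumes "CARD('a) = 2^h"
  shows "\<exists>s. s^2 = x"
proof -
  have h: "h \<ge> 1" by (rule h_pos[OF assms])
  have "(x^(2^(h-1)))^2 = x^(2^(h-1) * 2)" by (simp add: power_mult)
  also have "2^(h-1) * 2 = (2::nat)^h" using h
    by (metis Suc_diff_1 less_le_trans power_Suc2 zero_less_one)
  finally show ?thesis using frob[OF assms] by metis
qed

lemma key:
  fixes a b c :: "('a::{field,finite}, 'm::finite) sp"
  assumes two: "(2::'a) = 0"
  shows "qf_act (theta a) (transv c) = theta b \<longleftrightarrow>
     (\<forall>u. (bil (sp_add a b) u)^2 = (bil c u)^2 * (1 + theta a c))"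
proof -
  have pt: "theta a (transv c u) = theta b u \<longleftrightarrow>
     (bil (sp_add a b) u)^2 = (bil c u)^2 * (1 + theta a c)" for u
  proof -
    let ?X = "(bil c u)^2 * (1 + theta a c)"
    have e1: "(bil (sp_add a b) u)^2 = (bil a u)^2 + (bil b u)^2"
      by (simp add: bil_add_left c2_sq[OF two])
    have "theta a (transv c u) = theta b u \<longleftrightarrow> theta a u + ?X + theta b u = 0"
      by (simp add: theta_transv[OF two] c2_eq[OF two])
    also have "theta a u + ?X + theta b u = ((bil a u)^2 + (bil b u)^2 + ?X) + (theta0 u + theta0 u)"
      unfolding theta_def by (simp add: algebra_simps)
    also have "\<dots> = (bil a u)^2 + (bil b u)^2 + ?X" by (simp add: c2_add_self[OF two])
    finally show ?thesis using e1 c2_eq[OF two] by simp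
  qed
  show ?thesis
    unfolding qf_act_def inv_transv[OF two] fun_eq_iff pt by simp
qed

theorem lemmaA6:
  fixes a b :: "('a::{field, finite}, 'm::finite) sp" and h :: nat
  assumes "CARD('a) = 2 ^ h"
    and "a \<noteq> b"
  shows "((\<exists>c. qf_act (theta a) (transv c) = theta b)
           \<longleftrightarrow> (\<exists>\<gamma>::'a. \<gamma> \<noteq> 0 \<and> qf_act (theta a) (transv (sp_scale \<gamma> (sp_add a b))) = theta b))
       \<and> ((\<exists>\<gamma>::'a. \<gamma> \<noteq> 0 \<and> qf_act (theta a) (transv (sp_scale \<gamma> (sp_add a b))) = theta b)
           \<longleftrightarrow> trace2 h (theta0 a) = trace2 h (theta0 b))
       \<and> (trace2 h (theta0 a) = trace2 h (theta0 b)
           \<longleftrightarrow> \<not> irreducible [:theta0 a + theta0 b, 1, 1:])"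
proof -
  note card = assms(1)
  have two: "(2::'a) = 0" by (rule char2[OF card])
  define w where "w = sp_add a b"
  have w0: "w \<noteq> (0, 0)"
  proof
    assume "w = (0, 0)"
    then have "a = b" unfolding w_def sp_add_def sp_eq using c2_eq[OF two] by simp
    then show False using assms(2) by simp
  qed
  obtain u0 where u0: "bil w u0 \<noteq> 0"
  proof -
    have "\<exists>u. bil w u \<noteq> 0"
    proof (rule ccontr)
      assume "\<not> ?thesis"
      then have "w = (0, 0)" by (intro bil_nondeg) (metis bil_zero surj_pair)
      then show False using w0 by simp
    qed
    then show ?thesis using that by blast
  qed
  have I: "(\<exists>c. qf_act (theta a) (transv c) = theta b)
           \<longleftrightarrow> (\<exists>\<gamma>::'a. \<gamma> \<noteq> 0 \<and> qf_act (theta a) (transv (sp_scale \<gamma> (sp_add a b))) = theta b)"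
  proof
    assume "\<exists>c. qf_act (theta a) (transv c) = theta b"
    then obtain c where c: "qf_act (theta a) (transv c) = theta b" by blast
    then have cu: "\<forall>u. (bil w u)^2 = (bil c u)^2 * (1 + theta a c)"
      using key[OF two] unfolding w_def by blast
    obtain s where s: "s^2 = 1 + theta a c" using sqrt_ex[OF card] by blast
    have "bil w u = bil (sp_scale s c) u" for u
    proof -
      have "(bil w u)^2 = (s * bil c u)^2" using cu[rule_format, of u] s by (simp add: power_mult_distrib mult.commute)
      then show ?thesis using c2_sq_inj[OF two] by (simp add: bil_scale_left)
    qed
    then have wsc: "w = sp_scale s c" by (rule bil_nondeg)
    then have s0: "s \<noteq> 0" using w0 sp_scale_zero by metis
    have "sp_scale (1/s) w = c" using wsc s0 by (simp add: sp_scale_scale sp_scale_one)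
    then show "\<exists>\<gamma>::'a. \<gamma> \<noteq> 0 \<and> qf_act (theta a) (transv (sp_scale \<gamma> (sp_add a b))) = theta b"
      using c s0 unfolding w_def by (intro exI[of _ "1/s"]) simp
  qed blast
  define \<beta> where "\<beta> = bil a b"
  define D where "D = theta0 a + theta0 b + (\<beta>^2 + \<beta>)"
  have thw: "theta a (sp_scale g w) = g^2 * D" for g
  proof -
    have "bil a w = \<beta>" unfolding w_def \<beta>_def by (simp add: bil_add_right bil_self[OF two])
    moreover have "theta0 w = theta0 a + theta0 b + \<beta>" unfolding w_def \<beta>_def by (simp add: theta0_add)
    ultimately show ?thesis unfolding theta_def D_def
      by (simp add: theta0_scale bil_scale_right power_mult_distrib algebra_simps)
  qed
  have cond: "qf_act (theta a) (transv (sp_scale g w)) = theta b \<longleftrightarrow> g^2 + g^4 * D = 1" for g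
  proof -
    have "qf_act (theta a) (transv (sp_scale g w)) = theta b \<longleftrightarrow>
       (\<forall>u. (bil w u)^2 * 1 = (bil w u)^2 * (g^2 * (1 + g^2 * D)))"
      unfolding key[OF two] w_def[symmetric] thw
      by (simp add: bil_scale_left power_mult_distrib algebra_simps)
    also have "\<dots> \<longleftrightarrow> 1 = g^2 * (1 + g^2 * D)"
    proof
      assume "\<forall>u. (bil w u)^2 * 1 = (bil w u)^2 * (g^2 * (1 + g^2 * D))"
      then have "(bil w u0)^2 * 1 = (bil w u0)^2 * (g^2 * (1 + g^2 * D))" by blast
      then show "1 = g^2 * (1 + g^2 * D)" using u0 by (metis mult_left_cancel power_not_zero)
    qed simp
    also have "\<dots> \<longleftrightarrow> g^2 + g^4 * D = 1"
      by (auto simp: algebra_simps power2_eq_square power4_eq_xxxx)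
    finally show ?thesis .
  qed
  have E: "(\<exists>g::'a. g \<noteq> 0 \<and> g^2 + g^4 * D = 1) \<longleftrightarrow> (\<exists>z. z^2 + z = D)"
  proof
    assume "\<exists>g::'a. g \<noteq> 0 \<and> g^2 + g^4 * D = 1"
    then obtain g where g: "g \<noteq> 0" "g^2 + g^4 * D = 1" by blast
    define z where "z = 1 / g^2"
    have "g^4 * (z^2 + z) = 1 + g^2"
      using g(1) unfolding z_def by (simp add: field_simps power2_eq_square power4_eq_xxxx)
    also have "\<dots> = g^4 * D + 2 * g^2" using g(2) by (simp add: algebra_simps)
    finally have "g^4 * (z^2 + z) = g^4 * D" using two by simp
    then show "\<exists>z. z^2 + z = D" using g(1) by auto
  next
    assume "\<exists>z. z^2 + z = D"
    then obtain z where z: "z^2 + z = D" by blast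
    show "\<exists>g::'a. g \<noteq> 0 \<and> g^2 + g^4 * D = 1"
    proof (cases "z = 0")
      case True
      then show ?thesis using z by (intro exI[of _ 1]) simp
    next
      case False
      obtain g where g: "g^2 = 1 / z" using sqrt_ex[OF card] by blast
      have g0: "g \<noteq> 0" using g False by auto
      have "g^4 = (g^2)^2" by (simp add: power_mult[symmetric])
      then have "g^2 + g^4 * D = 1/z + (z^2 + z) / z^2" using g z by (simp add: power2_eq_square)
      also have "\<dots> = 1 + 2 / z" using False by (simp add: field_simps power2_eq_square)
      finally show ?thesis using g0 two by auto
    qed
  qed
  have trD: "trace2 h D = 0 \<longleftrightarrow> trace2 h (theta0 a) = trace2 h (theta0 b)"
  proof -
    have "trace2 h D = trace2 h (theta0 a + theta0 b)"
      unfolding D_def tr_add[OF two, where x="theta0 a + theta0 b" and y="\<beta>^2 + \<beta>"] tr_AS[OF card] by simp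
    then show ?thesis using tr_eq[OF two, where x="theta0 a" and y="theta0 b"] by simp
  qed
  have II: "(\<exists>\<gamma>::'a. \<gamma> \<noteq> 0 \<and> qf_act (theta a) (transv (sp_scale \<gamma> (sp_add a b))) = theta b)
           \<longleftrightarrow> trace2 h (theta0 a) = trace2 h (theta0 b)"
    unfolding w_def[symmetric] cond E trD[symmetric] tr_iff[OF card] by simp
  have III: "trace2 h (theta0 a) = trace2 h (theta0 b) \<longleftrightarrow> \<not> irreducible [:theta0 a + theta0 b, 1, 1:]"
  proof -
    let ?d = "theta0 a + theta0 b"
    have "\<not> irreducible [:?d, 1, 1:] \<longleftrightarrow> (\<exists>x. poly [:?d, 1, 1:] x = 0)"
      by (rule deg2_reducible) simp
    also have "\<dots> \<longleftrightarrow> (\<exists>x. x^2 + x = ?d)"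
    proof -
      have "poly [:?d, 1, 1:] x = 0 \<longleftrightarrow> x^2 + x = ?d" for x
      proof -
        have "poly [:?d, 1, 1:] x = (x^2 + x) + ?d" by (simp add: algebra_simps power2_eq_square)
        then show ?thesis using c2_eq[OF two, of "x^2 + x" ?d] by (simp only:)
      qed
      then show ?thesis by simp
    qed
    also have "\<dots> \<longleftrightarrow> trace2 h ?d = 0" using tr_iff[OF card] by simp
    finally show ?thesis using tr_eq[OF two] by simp
  qed
  show ?thesis using I II III by blast
qed

end
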